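(* Let $k$ be an integer and let $\mathbf{x}\in\mathcal{A}_k$, where $\mathbf{x}$ is a vertex of $P^n_{\mathrm{SEP}}$ (so $\mathbf{x}$ has $n$ nodes). Then $k+3\le n\le 2k$.
   Context: $K_n=(V_n,E_n)$ is the complete undirected graph on $n$ nodes; $\delta(S)$ is the set of edges with exactly one endpoint in $S\subseteq V_n$. $P^n_{\mathrm{SEP}}=\{\mathbf{x}\in\mathbb{R}^{E_n} : \sum_{e\in\delta(v)}x_e=2\ \forall v;\ \sum_{e\in\delta(S)}x_e\ge 2\ \forall S \text{ with } 3\le|S|\le n-3;\ 0\le x_e\le 1\}$. A vertex is an extreme point of $P^n_{\mathrm{SEP}}$; it is fractional if it is not integral. The support graph of $\mathbf{x}$ is $G_{\mathbf{x}}=(V_n,E_{\mathbf{x}})$ with $E_{\mathbf{x}}=\{e: x_e>0\}$. $\mathcal{F}_k$ is the set of all fractional vertices $\mathbf{x}$ of $P^n_{\mathrm{SEP}}$, over all $n$, with $|E_{\mathbf{x}}|=n+k$; $\mathcal{A}_k$ is the set of $\mathbf{x}\in\mathcal{F}_k$ whose support graph $G_{\mathbf{x}}$ has no node of degree $2$. *)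

theory Defs
  imports "HOL-Analysis.Analysis"
begin

text \<open>Complete graph K_n on node set V_n = {0..<n}; edges are 2-element node sets.
  A point of R^{E_n} is a function on edge sets that vanishes off E_n.\<close>

definition V :: "nat \<Rightarrow> nat set" where
  "V n = {0..<n}"

definition E :: "nat \<Rightarrow> nat set set" where
  "E n = {{i, j} | i j. i < n \<and> j < n \<and> i \<noteq> j}"

definition cut :: "nat \<Rightarrow> nat set \<Rightarrow> nat set set" where
  "cut n S = {e \<in> E n. card (e \<inter> S) = 1}"

definition P_SEP :: "nat \<Rightarrow> (nat set \<Rightarrow> real) set" where
  "P_SEP n = {x. (\<forall>e. e \<notin> E n \<longrightarrow> x e = 0)
     \<and> (\<forall>v \<in> V n. (\<Sum>e\<in>cut n {v}. x e) = 2)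
     \<and> (\<forall>S. S \<subseteq> V n \<and> 3 \<le> card S \<and> card S \<le> n - 3 \<longrightarrow> (\<Sum>e\<in>cut n S. x e) \<ge> 2)
     \<and> (\<forall>e \<in> E n. 0 \<le> x e \<and> x e \<le> 1)}"

definition is_vertex :: "(nat set \<Rightarrow> real) \<Rightarrow> (nat set \<Rightarrow> real) set \<Rightarrow> bool" where
  "is_vertex x P \<longleftrightarrow> x \<in> P \<and>
     \<not> (\<exists>y \<in> P. \<exists>z \<in> P. y \<noteq> z \<and> (\<exists>u::real. 0 < u \<and> u < 1 \<and> x = (\<lambda>e. (1 - u) * y e + u * z e)))"

definition fractional :: "nat \<Rightarrow> (nat set \<Rightarrow> real) \<Rightarrow> bool" where
  "fractional n x \<longleftrightarrow> (\<exists>e \<in> E n. x e \<notin> \<int>)"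

definition support :: "nat \<Rightarrow> (nat set \<Rightarrow> real) \<Rightarrow> nat set set" where
  "support n x = {e \<in> E n. x e > 0}"

definition support_degree :: "nat \<Rightarrow> (nat set \<Rightarrow> real) \<Rightarrow> nat \<Rightarrow> nat" where
  "support_degree n x v = card {e \<in> support n x. v \<in> e}"

definition in_A :: "int \<Rightarrow> nat \<Rightarrow> (nat set \<Rightarrow> real) \<Rightarrow> bool" where
  "in_A k n x \<longleftrightarrow> is_vertex x (P_SEP n) \<and> fractional n x
     \<and> int (card (support n x)) = int n + k
     \<and> (\<forall>v \<in> V n. support_degree n x v \<noteq> 2)"

end

theory Submission
  imports Defs
begin


lemma finite_E: "finite (E n)"
proof -
  have "E n \<subseteq> Pow {0..<n}" by (auto simp: E_def)
  then show ?thesis by (rule finite_subset) simp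
qed

lemma card_pair_int: "i \<noteq> j \<Longrightarrow> card ({i,j} \<inter> S) = (if i\<in>S then 1 else 0) + (if j\<in>S then 1 else 0)"
  by (cases "i\<in>S"; cases "j\<in>S") auto

lemma cut_sum: "sum y (cut n S) = (\<Sum>e\<in>E n. if card (e\<inter>S) = 1 then y e else 0)"
  unfolding cut_def by (simp add: sum.inter_filter[OF finite_E])

lemma submod_edge:
  assumes "e \<in> E n"
  shows "(if card (e\<inter>S) = 1 then y e else 0) + (if card (e\<inter>T) = 1 then y e else 0)
   = (if card (e\<inter>(S\<inter>T)) = 1 then y e else 0) + (if card (e\<inter>(S\<union>T)) = 1 then y e else 0)
     + 2 * (if e\<inter>(S-T) \<noteq> {} \<and> e\<inter>(T-S) \<noteq> {} then y e else (0::real))"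
proof -
  obtain i j where e: "e = {i,j}" "i \<noteq> j" using assms by (auto simp: E_def)
  show ?thesis unfolding e(1) using e(2)
    by (simp add: card_pair_int[OF e(2)])
qed

lemma submod:
  "sum y (cut n S) + sum y (cut n T) = sum y (cut n (S\<inter>T)) + sum y (cut n (S\<union>T))
     + 2 * (\<Sum>e\<in>E n. if e\<inter>(S-T) \<noteq> {} \<and> e\<inter>(T-S) \<noteq> {} then y e else (0::real))"
proof -
  have "(\<Sum>e\<in>E n. (if card (e\<inter>S) = 1 then y e else 0) + (if card (e\<inter>T) = 1 then y e else 0))
    = (\<Sum>e\<in>E n. (if card (e\<inter>(S\<inter>T)) = 1 then y e else 0) + (if card (e\<inter>(S\<union>T)) = 1 then y e else 0)
     + 2 * (if e\<inter>(S-T) \<noteq> {} \<and> e\<inter>(T-S) \<noteq> {} then y e else (0::real)))"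
    by (rule sum.cong[OF refl], rule submod_edge, assumption)
  then show ?thesis unfolding cut_sum by (simp add: sum.distrib sum_distrib_left)
qed

lemma cut_compl: "cut n S = cut n ({0..<n} - S)"
proof -
  have "card (e \<inter> S) = 1 \<longleftrightarrow> card (e \<inter> ({0..<n} - S)) = 1" if he: "e \<in> E n" for e
  proof -
    obtain i j where e: "e = {i,j}" "i \<noteq> j" "i < n" "j < n" using he unfolding E_def by blast
    show ?thesis unfolding e(1) using e(2-4) by (simp add: card_pair_int[OF e(2)])
  qed
  then show ?thesis unfolding cut_def by blast
qed

lemma cut_single: "cut n {v} = {e\<in>E n. v\<in>e}"
proof -
  have "card (e \<inter> {v}) = 1 \<longleftrightarrow> v \<in> e" for e :: "nat set"
    by (cases "v \<in> e") auto
  then show ?thesis unfolding cut_def by blast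
qed

lemma cut_empty: "cut n {} = {}" unfolding cut_def by simp

lemma pair_cut:
  assumes "i<n" "j<n" "i\<noteq>j"
  shows "sum y (cut n {i,j}) = sum y (cut n {i}) + sum y (cut n {j}) - 2 * (y {i,j}::real)"
proof -
  have s: "{e\<in>E n. e\<inter>({i}-{j}) \<noteq> {} \<and> e\<inter>({j}-{i}) \<noteq> {}} = {{i,j}}"
    using assms by (auto simp: E_def)
  have "(\<Sum>e\<in>E n. if e\<inter>({i}-{j}) \<noteq> {} \<and> e\<inter>({j}-{i}) \<noteq> {} then y e else 0) = y {i,j}"
    using sum.inter_filter[OF finite_E, symmetric, of "\<lambda>e. e\<inter>({i}-{j}) \<noteq> {} \<and> e\<inter>({j}-{i}) \<noteq> {}" y n]
    s by simp
  moreover have "{i} \<inter> {j} = {}" "{i} \<union> {j} = {i,j}" using assms by auto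
  ultimately show ?thesis using submod[of y n "{i}" "{j}"] by (simp add: cut_empty)
qed

lemma kernel_exists:
  fixes A :: "('e \<Rightarrow> real) set"
  shows "card A \<le> m \<Longrightarrow> finite A \<Longrightarrow> finite F \<Longrightarrow> card A < card F \<Longrightarrow>
    \<exists>d. (\<forall>e. e \<notin> F \<longrightarrow> d e = 0) \<and> (\<exists>e\<in>F. d e \<noteq> 0) \<and> (\<forall>a\<in>A. (\<Sum>e\<in>F. a e * d e) = 0)"
proof (induction m arbitrary: A F)
  case 0
  then have "A = {}" by simp
  from 0 obtain e0 where "e0 \<in> F" by (metis card.empty ex_in_conv less_nat_zero_code)
  then show ?case using \<open>A = {}\<close> \<open>finite F\<close>
    by (intro exI[of _ "\<lambda>e. if e = e0 then 1 else 0"]) auto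
next
  case (Suc m)
  show ?case
  proof (cases "A = {}")
    case True
    from Suc obtain e0 where "e0 \<in> F" by (metis card.empty ex_in_conv less_nat_zero_code)
    then show ?thesis using True \<open>finite F\<close>
      by (intro exI[of _ "\<lambda>e. if e = e0 then 1 else 0"]) auto
  next
    case False
    then obtain a where aA: "a \<in> A" by blast
    define A0 where "A0 = A - {a}"
    have cA0: "card A0 = card A - 1" "finite A0" "card A \<ge> 1" using aA Suc.prems by (auto simp: A0_def Suc_le_eq card_gt_0_iff)
    have A_eq: "A = insert a A0" using aA by (auto simp: A0_def)
    show ?thesis
    proof (cases "\<forall>e\<in>F. a e = 0")
      case True
      have "card A0 \<le> m" "card A0 < card F" using cA0 Suc.prems by auto
      from Suc.IH[OF this(1) cA0(2) Suc.prems(3) this(2)] obtain d where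
        d: "\<forall>e. e \<notin> F \<longrightarrow> d e = 0" "\<exists>e\<in>F. d e \<noteq> 0" "\<forall>a\<in>A0. (\<Sum>e\<in>F. a e * d e) = 0" by blast
      show ?thesis using d True unfolding A_eq by (intro exI[of _ d]) auto
    next
      case False
      then obtain e0 where e0: "e0 \<in> F" "a e0 \<noteq> 0" by blast
      define F' where "F' = F - {e0}"
      define g where "g = (\<lambda>b e. b e - b e0 / a e0 * a e)"
      define A' where "A' = g ` A0"
      have fF': "finite F'" "card F' = card F - 1" using e0 Suc.prems by (auto simp: F'_def)
      have "card A' \<le> card A0" unfolding A'_def by (rule card_image_le) (rule cA0(2))
      then have cA': "card A' \<le> m" "card A' < card F'" "finite A'"
        using cA0 Suc.prems fF' by (auto simp: A'_def)
      from Suc.IH[OF cA'(1) cA'(3) fF'(1) cA'(2)] obtain d' where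
        d': "\<forall>e. e \<notin> F' \<longrightarrow> d' e = 0" "\<exists>e\<in>F'. d' e \<noteq> 0" "\<forall>b\<in>A'. (\<Sum>e\<in>F'. b e * d' e) = 0" by blast
      define d where "d = d'(e0 := - (\<Sum>e\<in>F'. a e * d' e) / a e0)"
      have dF': "\<And>b. (\<Sum>e\<in>F'. b e * d e) = (\<Sum>e\<in>F'. b e * d' e)"
        by (rule sum.cong) (auto simp: d_def F'_def)
      have split: "(\<Sum>e\<in>F. b e * d e) = b e0 * d e0 + (\<Sum>e\<in>F'. b e * d' e)" for b
        using sum.remove[OF Suc.prems(3) e0(1), of "\<lambda>e. b e * d e"] dF'[of b] by (simp add: F'_def)
      have d1: "\<forall>e. e \<notin> F \<longrightarrow> d e = 0" using d' e0 by (auto simp: d_def F'_def)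
      have d2: "\<exists>e\<in>F. d e \<noteq> 0" using d' by (auto simp: d_def F'_def)
      have d3: "(\<Sum>e\<in>F. a e * d e) = 0" using split[of a] e0(2) by (simp add: d_def)
      have d4: "(\<Sum>e\<in>F. b e * d e) = 0" if "b \<in> A0" for b
      proof -
        have "(\<Sum>e\<in>F'. g b e * d' e) = 0" using d' that by (auto simp: A'_def)
        then have "(\<Sum>e\<in>F'. b e * d' e) - b e0 / a e0 * (\<Sum>e\<in>F'. a e * d' e) = 0"
          by (simp add: g_def algebra_simps sum_subtractf sum_distrib_left)
        then show ?thesis using split[of b] e0(2) by (simp add: d_def field_simps)
      qed
      show ?thesis using d1 d2 d3 d4 unfolding A_eq by (intro exI[of _ d]) auto
    qed
  qed
qed



definition crosses :: "nat set \<Rightarrow> nat set \<Rightarrow> bool" where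
  "crosses A B \<longleftrightarrow> A \<inter> B \<noteq> {} \<and> \<not> A \<subseteq> B \<and> \<not> B \<subseteq> A"

definition laminar :: "nat set set \<Rightarrow> bool" where
  "laminar L \<longleftrightarrow> (\<forall>A\<in>L. \<forall>B\<in>L. \<not> crosses A B)"

lemma crosses_sym: "crosses A B \<longleftrightarrow> crosses B A"
  unfolding crosses_def by blast

lemma laminar_count:
  "card L = m \<Longrightarrow> finite U \<Longrightarrow> laminar L \<Longrightarrow> L \<subseteq> Pow U \<Longrightarrow> (\<forall>A\<in>L. 2 \<le> card A) \<Longrightarrow> card L \<le> card U - 1"
proof (induction m arbitrary: L U)
  case 0
  then show ?case by simp
next
  case (Suc m)
  have finL: "finite L" using Suc.prems(2,4) by (meson finite_Pow_iff finite_subset)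
  then have "L \<noteq> {}" using Suc.prems(1) by auto
  define c where "c = Min (card ` L)"
  have "c \<in> card ` L" unfolding c_def using finL \<open>L \<noteq> {}\<close> by (intro Min_in) auto
  then obtain S where S: "S \<in> L" "card S = c" by auto
  have Smin: "card S \<le> card X" if "X \<in> L" for X
    unfolding S(2) c_def using finL that by (intro Min_le) auto
  have finS: "finite S" "2 \<le> card S" using S Suc.prems by (auto intro: finite_subset)
  then obtain a where aS: "a \<in> S" by (metis card.empty ex_in_conv not_numeral_le_zero)
  have SU: "S \<subseteq> U" using S Suc.prems by auto
  have finX: "finite X" if "X \<in> L" for X using that Suc.prems by (auto intro: finite_subset)
  have big: "S \<subset> X" if "X \<in> L" "X \<noteq> S" "a \<in> X" for X
  proof -
    have "\<not> crosses X S" using Suc.prems(3) that S unfolding laminar_def by blast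
    then have "X \<subseteq> S \<or> S \<subseteq> X" using that aS unfolding crosses_def by blast
    moreover have "\<not> X \<subset> S" using Smin[OF that(1)] psubset_card_mono[OF finS(1), of X] by (meson leD)
    ultimately show ?thesis using that by blast
  qed
  define L' where "L' = (\<lambda>X. X - {a}) ` (L - {S})"
  have inj: "inj_on (\<lambda>X. X - {a}) (L - {S})"
  proof (rule inj_onI)
    fix X Y assume XY: "X \<in> L - {S}" "Y \<in> L - {S}" "X - {a} = Y - {a}"
    have no: False if "X \<in> L - {S}" "Y \<in> L - {S}" "X - {a} = Y - {a}" "a \<in> X" "a \<notin> Y" for X Y
    proof -
      have "S \<subset> X" using big that by blast
      then have "S - {a} \<subseteq> Y" using that by blast
      moreover have "S - {a} \<noteq> {}"
      proof
        assume "S - {a} = {}"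
        then have "S \<subseteq> {a}" by blast
        then have "card S \<le> 1" using card_mono[of "{a}" S] by simp
        then show False using finS by simp
      qed
      ultimately have "Y \<inter> S \<noteq> {}" by blast
      moreover have "\<not> crosses Y S" using Suc.prems(3) that S unfolding laminar_def by blast
      ultimately have "Y \<subseteq> S \<or> S \<subseteq> Y" unfolding crosses_def by blast
      moreover have "\<not> Y \<subset> S" using Smin[of Y] that(2) psubset_card_mono[OF finS(1), of Y] by (meson DiffD1 leD)
      ultimately show False using that aS by blast
    qed
    show "X = Y"
    proof (cases "a \<in> X \<longleftrightarrow> a \<in> Y")
      case True then show ?thesis using XY(3) by blast
    next
      case False then show ?thesis using no[OF XY] no[OF XY(2,1) XY(3)[symmetric]] by blast
    qed
  qed
  have cL': "card L' = m" unfolding L'_def using card_image[OF inj] Suc.prems(1) S(1) finL by simp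
  have lamL': "laminar L'" unfolding laminar_def
  proof (intro ballI)
    fix A B assume "A \<in> L'" "B \<in> L'"
    then obtain X Y where XY: "X \<in> L" "Y \<in> L" "A = X - {a}" "B = Y - {a}" unfolding L'_def by blast
    have "\<not> crosses X Y" using Suc.prems(3) XY unfolding laminar_def by blast
    then have "X \<inter> Y = {} \<or> X \<subseteq> Y \<or> Y \<subseteq> X" unfolding crosses_def by blast
    then show "\<not> crosses A B" unfolding XY crosses_def by blast
  qed
  have powL': "L' \<subseteq> Pow (U - {a})" using Suc.prems(4) unfolding L'_def by blast
  have szL': "\<forall>A\<in>L'. 2 \<le> card A"
  proof
    fix A assume "A \<in> L'"
    then obtain X where X: "X \<in> L" "X \<noteq> S" "A = X - {a}" unfolding L'_def by blast
    show "2 \<le> card A"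
    proof (cases "a \<in> X")
      case True
      have "card S < card X" using big[OF X(1,2) True] finX[OF X(1)] psubset_card_mono by blast
      then show ?thesis using X(3) True finS(2) finX[OF X(1)] by simp
    next
      case False then show ?thesis using X Suc.prems(5) by simp
    qed
  qed
  have "card L' \<le> card (U - {a}) - 1"
    using Suc.IH[OF cL' _ lamL' powL' szL'] Suc.prems(2) by simp
  moreover have "card (U - {a}) = card U - 1" using aS SU Suc.prems(2) by auto
  moreover have "card S \<le> card U" using SU Suc.prems(2) card_mono by blast
  ultimately show ?case using cL' Suc.prems(1) finS(2) by linarith
qed



lemma cross_inter: "\<not> crosses R T \<Longrightarrow> crosses R (S\<inter>T) \<Longrightarrow> crosses R S"
  unfolding crosses_def by blast
lemma cross_union: "\<not> crosses R T \<Longrightarrow> crosses R (S\<union>T) \<Longrightarrow> S \<inter> T \<noteq> {} \<Longrightarrow> crosses R S"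
  unfolding crosses_def by blast
lemma no_cross_inter: "\<not> crosses T (S\<inter>T)"
  unfolding crosses_def by blast
lemma no_cross_union: "\<not> crosses T (S\<union>T)"
  unfolding crosses_def by blast

lemma PS:
  assumes "x \<in> P_SEP n"
  shows "\<And>e. e \<notin> E n \<Longrightarrow> x e = 0"
    and "\<And>v. v < n \<Longrightarrow> sum x (cut n {v}) = 2"
    and "\<And>S. S \<subseteq> {0..<n} \<Longrightarrow> 3 \<le> card S \<Longrightarrow> card S \<le> n - 3 \<Longrightarrow> 2 \<le> sum x (cut n S)"
    and "\<And>e. e \<in> E n \<Longrightarrow> 0 \<le> x e"
    and "\<And>e. e \<in> E n \<Longrightarrow> x e \<le> 1"
  using assms unfolding P_SEP_def V_def by auto

lemma pairE: "e \<in> E n \<Longrightarrow> (\<And>i j. e = {i,j} \<Longrightarrow> i \<noteq> j \<Longrightarrow> i < n \<Longrightarrow> j < n \<Longrightarrow> P) \<Longrightarrow> P"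
  unfolding E_def by blast

lemma pair_in_E: "i < n \<Longrightarrow> j < n \<Longrightarrow> i \<noteq> j \<Longrightarrow> {i,j} \<in> E n"
  unfolding E_def by blast

lemma cut_ge2:
  assumes xP: "x \<in> P_SEP n" and S: "S \<subseteq> {0..<n}" "S \<noteq> {}" "S \<noteq> {0..<n}"
  shows "2 \<le> sum x (cut n S)"
proof -
  have small: "2 \<le> sum x (cut n A)" if A: "A \<subseteq> {0..<n}" "A \<noteq> {}" "card A \<le> 2" for A
  proof -
    have fA: "finite A" using A(1) finite_subset by blast
    have "card A \<noteq> 0" using fA A(2) by simp
    then have "card A = 1 \<or> card A = 2" using A(3) by linarith
    then show ?thesis
    proof
      assume "card A = 1"
      then obtain v where "A = {v}" by (rule card_1_singletonE)
      then show ?thesis using PS(2)[OF xP, of v] A(1) by simp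
    next
      assume "card A = 2"
      then obtain i j where ij: "A = {i,j}" "i \<noteq> j" by (meson card_2_iff)
      then have ij2: "i < n" "j < n" using A(1) by auto
      have "x {i,j} \<le> 1" using PS(5)[OF xP] pair_in_E[OF ij2 ij(2)] by blast
      then show ?thesis unfolding ij(1) pair_cut[OF ij2 ij(2)] PS(2)[OF xP ij2(1)] PS(2)[OF xP ij2(2)] by simp
    qed
  qed
  have fS: "finite S" using S(1) finite_subset by blast
  have "S \<subset> {0..<n}" using S(1,3) by blast
  then have cS: "card S < n" using psubset_card_mono[of "{0..<n}" S] by simp
  show ?thesis
  proof (cases "card S \<le> 2")
    case True then show ?thesis using small S by blast
  next
    case False
    show ?thesis
    proof (cases "card S \<le> n - 3")
      case True then show ?thesis using PS(3)[OF xP S(1)] False by simp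
    next
      case False2: False
      define C where "C = {0..<n} - S"
      have "card C = n - card S" unfolding C_def using S(1) fS by (simp add: card_Diff_subset)
      then have "card C \<le> 2" using False2 by simp
      moreover have "C \<noteq> {}" using S unfolding C_def by blast
      moreover have "C \<subseteq> {0..<n}" unfolding C_def by blast
      ultimately show ?thesis using small[of C] cut_compl[of n S] unfolding C_def by simp
    qed
  qed
qed

definition TN :: "nat \<Rightarrow> (nat set \<Rightarrow> real) \<Rightarrow> nat set set" where
  "TN n x = {S. S \<subseteq> {1..<n} \<and> 2 \<le> card S \<and> S \<noteq> {1..<n} \<and> sum x (cut n S) = 2}"

lemma finite_TN: "finite (TN n x)"
  by (rule finite_subset[of _ "Pow {1..<n}"]) (auto simp: TN_def)

lemma uncross:
  assumes xP: "x \<in> P_SEP n"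
    and LT: "L \<subseteq> TN n x" and lam: "laminar L"
    and maxL: "\<And>S. S \<in> TN n x \<Longrightarrow> laminar (insert S L) \<Longrightarrow> S \<in> L"
    and d0: "\<And>e. e \<notin> support n x \<Longrightarrow> d e = 0"
    and dv: "\<And>v. v < n \<Longrightarrow> sum d (cut n {v}) = 0"
    and dL: "\<And>S. S \<in> L \<Longrightarrow> sum d (cut n S) = 0"
    and S: "S \<subseteq> {0..<n}" "S \<noteq> {}" "S \<noteq> {0..<n}" "sum x (cut n S) = 2"
  shows "sum d (cut n S) = (0::real)"
proof -
  have finL: "finite L" using finite_TN LT finite_subset by blast
  have N: "\<And>S. card {R\<in>L. crosses R S} = c \<Longrightarrow> S \<subseteq> {1..<n} \<Longrightarrow> S \<noteq> {} \<Longrightarrow> sum x (cut n S) = 2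
     \<Longrightarrow> sum d (cut n S) = 0" for c
  proof (induction c rule: less_induct)
    case (less c S)
    have fS: "finite S" using less.prems(2) finite_subset by blast
    show ?case
    proof (cases "card S = 1")
      case True
      then obtain v where "S = {v}" by (rule card_1_singletonE)
      then show ?thesis using dv less.prems(2) by auto
    next
      case c1: False
      show ?thesis
      proof (cases "S = {1..<n}")
        case True
        have "{0..<n} - S = {0}" using True less.prems(3) by auto
        then have "cut n S = cut n {0}" using cut_compl[of n S] by simp
        moreover have "0 < n" using True less.prems(3) by auto
        ultimately show ?thesis using dv by simp
      next
        case cU: False
        have "card S \<noteq> 0" using fS less.prems(3) by simp
        then have "2 \<le> card S" using c1 by linarith
        then have STN: "S \<in> TN n x" using cU less.prems(2,4) by (simp add: TN_def)
        show ?thesis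
        proof (cases "\<exists>T\<in>L. crosses T S")
          case False
          have "laminar (insert S L)" unfolding laminar_def
          proof (intro ballI)
            fix A B assume AB: "A \<in> insert S L" "B \<in> insert S L"
            show "\<not> crosses A B"
            proof (cases "A = S")
              case True
              then show ?thesis using AB False crosses_sym[of A B] by (cases "B = S") (auto simp: crosses_def)
            next
              case nA: False
              then have "A \<in> L" using AB by blast
              then show ?thesis using AB False lam unfolding laminar_def by (cases "B = S") auto
            qed
          qed
          then have "S \<in> L" using maxL STN by blast
          then show ?thesis using dL by blast
        next
          case True
          then obtain T where T: "T \<in> L" "crosses T S" by blast
          have TT: "T \<subseteq> {1..<n}" "sum x (cut n T) = 2" using T(1) LT by (auto simp: TN_def)
          define I where "I = S \<inter> T"
          define W where "W = S \<union> T"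
          have I: "I \<subseteq> {1..<n}" "I \<noteq> {}" using T(2) less.prems(2) unfolding I_def crosses_def by auto
          have W: "W \<subseteq> {1..<n}" "W \<noteq> {}" using TT less.prems(2,3) unfolding W_def by auto
          have I2: "2 \<le> sum x (cut n I)" using I by (intro cut_ge2[OF xP]) auto
          have W2: "2 \<le> sum x (cut n W)" using W by (intro cut_ge2[OF xP]) auto
          define P where "P = (\<lambda>e. e\<inter>(S-T) \<noteq> {} \<and> e\<inter>(T-S) \<noteq> {})"
          have ex0: "0 \<le> (\<Sum>e\<in>E n. if P e then x e else 0)"
            by (rule sum_nonneg) (auto simp: PS(4)[OF xP])
          have sm: "sum x (cut n S) + sum x (cut n T) = sum x (cut n I) + sum x (cut n W)
              + 2 * (\<Sum>e\<in>E n. if P e then x e else 0)"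
            unfolding I_def W_def P_def by (rule submod)
          have xI: "sum x (cut n I) = 2" and xW: "sum x (cut n W) = 2"
            and exx: "(\<Sum>e\<in>E n. if P e then x e else 0) = 0"
            using sm less.prems(4) TT(2) I2 W2 ex0 by linarith+
          have "\<forall>e\<in>E n. (if P e then x e else 0) = 0"
            using exx by (subst (asm) sum_nonneg_eq_0_iff[OF finite_E]) (auto simp: PS(4)[OF xP])
          then have "\<forall>e\<in>E n. (if P e then d e else 0) = 0"
            using d0 unfolding support_def by fastforce
          then have exd: "(\<Sum>e\<in>E n. if P e then d e else 0) = 0" by simp
          have smd: "sum d (cut n S) + sum d (cut n T) = sum d (cut n I) + sum d (cut n W)
              + 2 * (\<Sum>e\<in>E n. if P e then d e else 0)"
            unfolding I_def W_def P_def by (rule submod)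
          have nocross: "\<not> crosses R T" if "R \<in> L" for R using lam that T(1) unfolding laminar_def by blast
          have sub1: "{R\<in>L. crosses R I} \<subset> {R\<in>L. crosses R S}"
          proof
            show "{R\<in>L. crosses R I} \<subseteq> {R\<in>L. crosses R S}"
              using nocross cross_inter unfolding I_def by blast
            have "T \<notin> {R\<in>L. crosses R I}" using no_cross_inter unfolding I_def by blast
            then show "{R\<in>L. crosses R I} \<noteq> {R\<in>L. crosses R S}"
              using T by blast
          qed
          have sub2: "{R\<in>L. crosses R W} \<subset> {R\<in>L. crosses R S}"
          proof
            show "{R\<in>L. crosses R W} \<subseteq> {R\<in>L. crosses R S}"
            proof
              fix R assume "R \<in> {R\<in>L. crosses R W}"
              moreover have "S \<inter> T \<noteq> {}" using T(2) unfolding crosses_def by blast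
              ultimately show "R \<in> {R\<in>L. crosses R S}" using nocross cross_union unfolding W_def by blast
            qed
            have "T \<notin> {R\<in>L. crosses R W}" using no_cross_union unfolding W_def by blast
            then show "{R\<in>L. crosses R W} \<noteq> {R\<in>L. crosses R S}"
              using T by blast
          qed
          have lt1: "card {R\<in>L. crosses R I} < c" using psubset_card_mono[OF _ sub1] finL less.prems(1) by simp
          have lt2: "card {R\<in>L. crosses R W} < c" using psubset_card_mono[OF _ sub2] finL less.prems(1) by simp
          have "sum d (cut n I) = 0" using less.IH[OF lt1 refl I xI] .
          moreover have "sum d (cut n W) = 0" using less.IH[OF lt2 refl W xW] .
          moreover have "sum d (cut n T) = 0" using dL T(1) by blast
          ultimately show ?thesis using smd exd by simp
        qed
      qed
    qed
  qed
  show ?thesis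
  proof (cases "0 \<in> S")
    case False
    have "S \<subseteq> {1..<n}"
    proof
      fix y assume "y \<in> S"
      then show "y \<in> {1..<n}" using False S(1) by (cases y) auto
    qed
    then show ?thesis using N S by blast
  next
    case True
    define C where "C = {0..<n} - S"
    have "C \<subseteq> {1..<n}"
    proof
      fix y assume "y \<in> C"
      then show "y \<in> {1..<n}" using True unfolding C_def by (cases y) auto
    qed
    moreover have "C \<noteq> {}" using S(1,3) unfolding C_def by blast
    moreover have "cut n S = cut n C" unfolding C_def by (rule cut_compl)
    ultimately show ?thesis using N S(4) by simp
  qed
qed



lemma EV: "0 \<le> c \<Longrightarrow> (b = 0 \<or> 0 < c) \<Longrightarrow> eventually (\<lambda>\<epsilon>::real. \<epsilon> * \<bar>b\<bar> \<le> c) (at_right 0)"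
proof (cases "b = 0")
  case True
  assume "0 \<le> c" then show ?thesis using True by simp
next
  case False
  assume h: "0 \<le> c" "b = 0 \<or> 0 < c"
  then have c: "0 < c" using False by simp
  have "((\<lambda>\<epsilon>::real. \<epsilon> * \<bar>b\<bar>) \<longlongrightarrow> 0 * \<bar>b\<bar>) (at_right 0)"
    by (intro tendsto_mult tendsto_ident_at tendsto_const)
  then have "eventually (\<lambda>\<epsilon>::real. \<epsilon> * \<bar>b\<bar> < c) (at_right 0)"
    using order_tendstoD(2)[of _ "0 * \<bar>b\<bar>" _ c] c by simp
  then show ?thesis by (rule eventually_mono) simp
qed

lemma AB: "\<bar>t\<bar> \<le> (\<epsilon>::real) \<Longrightarrow> \<epsilon> * \<bar>b\<bar> \<le> c \<Longrightarrow> - c \<le> t * b \<and> t * b \<le> c"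
proof -
  assume a: "\<bar>t\<bar> \<le> \<epsilon>" "\<epsilon> * \<bar>b\<bar> \<le> c"
  have "\<bar>t * b\<bar> \<le> \<epsilon> * \<bar>b\<bar>" unfolding abs_mult using a(1) by (simp add: mult_right_mono)
  then show ?thesis using a(2) by (simp add: abs_le_iff)
qed

lemma card_filter_sum: "finite F \<Longrightarrow> card {e\<in>F. P e} = (\<Sum>e\<in>F. if P e then 1 else (0::nat))"
  using sum.inter_filter[of F "\<lambda>_. (1::nat)" P] by simp

theorem mainTheorem3:
  fixes k :: int and n :: nat and x :: "nat set \<Rightarrow> real"
  assumes "in_A k n x"
  shows "k + 3 \<le> int n \<and> int n \<le> 2 * k"
proof -
  from assms have vert: "is_vertex x (P_SEP n)" and frac: "fractional n x"
    and cF: "int (card (support n x)) = int n + k" and deg: "\<forall>v\<in>V n. support_degree n x v \<noteq> 2"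
    by (auto simp: in_A_def)
  have xP: "x \<in> P_SEP n" using vert by (simp add: is_vertex_def)
  define F where "F = support n x"
  have FE: "F \<subseteq> E n" by (auto simp: F_def support_def)
  have finF: "finite F" using FE finite_E finite_subset by blast
  have xF: "x e = 0" if "e \<in> E n" "e \<notin> F" for e
    using that PS(4)[OF xP, of e] by (auto simp: F_def support_def)
  have xpos: "0 < x e" if "e \<in> F" for e using that by (auto simp: F_def support_def)
  obtain e1 where "e1 \<in> E n" using frac by (auto simp: fractional_def)
  then have n2: "2 \<le> n" by (rule pairE) auto
  have deg3: "3 \<le> card {e\<in>F. v\<in>e}" if v: "v < n" for v
  proof -
    have "2 = sum x (cut n {v})" using PS(2)[OF xP v] by simp
    also have "\<dots> = sum x {e\<in>E n. v\<in>e}" by (simp add: cut_single)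
    also have "\<dots> = sum x {e\<in>F. v\<in>e}"
      by (rule sum.mono_neutral_right) (use finite_E FE xF in auto)
    also have "\<dots> \<le> of_nat (card {e\<in>F. v\<in>e}) * 1"
      by (rule sum_bounded_above) (use FE PS(5)[OF xP] in auto)
    finally have "2 \<le> card {e\<in>F. v\<in>e}" by simp
    moreover have "card {e\<in>F. v\<in>e} \<noteq> 2" using deg v by (simp add: V_def support_degree_def F_def)
    ultimately show ?thesis by linarith
  qed
  have n3: "3 \<le> n"
  proof (rule ccontr)
    assume "\<not> 3 \<le> n"
    then have "E n \<subseteq> {{0,1}}" by (auto simp: E_def)
    then have "{e\<in>F. 0\<in>e} \<subseteq> {{0,1}}" using FE by blast
    then have "card {e\<in>F. 0\<in>e} \<le> 1" using card_mono[of "{{0,1}}" "{e\<in>F. 0\<in>e}"] by simp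
    then show False using deg3[of 0] n2 by simp
  qed
  have hs: "(\<Sum>v<n. card {e\<in>F. v\<in>e}) = 2 * card F"
  proof -
    have "(\<Sum>v<n. card {e\<in>F. v\<in>e}) = (\<Sum>v<n. \<Sum>e\<in>F. if v \<in> e then 1 else (0::nat))"
      using card_filter_sum[OF finF] by simp
    also have "\<dots> = (\<Sum>e\<in>F. \<Sum>v<n. if v \<in> e then 1 else (0::nat))" by (rule sum.swap)
    also have "\<dots> = (\<Sum>e\<in>F. 2)"
    proof (rule sum.cong[OF refl])
      fix e assume "e \<in> F"
      then have "e \<in> E n" using FE by blast
      then obtain i j where e: "e = {i,j}" "i \<noteq> j" "i < n" "j < n" by (rule pairE)
      have "(\<Sum>v<n. if v \<in> e then 1 else (0::nat)) = card {v\<in>{..<n}. v \<in> e}"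
        using card_filter_sum[of "{..<n}" "\<lambda>v. v \<in> e"] by simp
      also have "{v\<in>{..<n}. v \<in> e} = {i,j}" using e by auto
      finally show "(\<Sum>v<n. if v \<in> e then 1 else (0::nat)) = 2" using e(2) by simp
    qed
    finally show ?thesis by simp
  qed
  have "(\<Sum>v<n. (3::nat)) \<le> (\<Sum>v<n. card {e\<in>F. v\<in>e})" by (rule sum_mono) (simp add: deg3)
  then have h3: "3 * n \<le> 2 * card F" using hs by simp
  have part2: "int n \<le> 2 * k" using h3 cF unfolding F_def by linarith
  have part1: "k + 3 \<le> int n"
  proof (rule ccontr)
    assume "\<not> k + 3 \<le> int n"
    then have bigF: "2 * n \<le> card F + 2" using cF unfolding F_def by linarith
    define U where "U = {1..<n}"
    have P0: "{} \<subseteq> TN n x \<and> laminar {}" by (simp add: laminar_def)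
    have bnd: "\<forall>L'. L' \<subseteq> TN n x \<and> laminar L' \<longrightarrow> card L' < card (TN n x) + 1"
      using card_mono[OF finite_TN] by (simp add: le_imp_less_Suc)
    obtain L where L: "L \<subseteq> TN n x \<and> laminar L" and Lmax: "\<forall>L'. L' \<subseteq> TN n x \<and> laminar L' \<longrightarrow> card L' \<le> card L"
      using Lattices_Big.ex_has_greatest_nat[OF P0 bnd] by blast
    have finL: "finite L" using L finite_TN finite_subset by blast
    have maxL: "S \<in> L" if "S \<in> TN n x" "laminar (insert S L)" for S
    proof (rule ccontr)
      assume "S \<notin> L"
      then have "card (insert S L) = card L + 1" using finL by simp
      moreover have "card (insert S L) \<le> card L" using Lmax that L by blast
      ultimately show False by simp
    qed
    have cardL: "card L + 3 \<le> n"
    proof -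
      have UL: "U \<notin> L" using L by (auto simp: TN_def U_def)
      have LU: "L \<subseteq> Pow U" using L by (auto simp: TN_def U_def)
      have cU: "card U = n - 1" by (simp add: U_def)
      have "laminar (insert U L)" unfolding laminar_def
      proof (intro ballI)
        fix A B assume AB: "A \<in> insert U L" "B \<in> insert U L"
        then have "A \<subseteq> U" "B \<subseteq> U" using LU by auto
        then show "\<not> crosses A B" using AB L unfolding laminar_def crosses_def by blast
      qed
      moreover have "\<forall>A\<in>insert U L. 2 \<le> card A" using L cU n3 by (auto simp: TN_def)
      moreover have "insert U L \<subseteq> Pow U" using LU by blast
      ultimately have "card (insert U L) \<le> card U - 1"
        using laminar_count[OF refl, of U "insert U L"] by (simp add: U_def)
      then show ?thesis using UL finL cU n3 by simp
    qed
    define ind :: "nat set \<Rightarrow> nat set \<Rightarrow> real" where "ind = (\<lambda>S e. if card (e\<inter>S) = 1 then 1 else (0::real))"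
    define Gen where "Gen = (\<lambda>v. {v}) ` {0..<n} \<union> L"
    define A where "A = ind ` Gen"
    have finA: "finite A" unfolding A_def Gen_def using finL by simp
    have "card A \<le> card Gen" unfolding A_def by (rule card_image_le) (simp add: Gen_def finL)
    also have "\<dots> \<le> card ((\<lambda>v. {v}) ` {0..<n}) + card L" unfolding Gen_def by (rule card_Un_le)
    also have "\<dots> \<le> n + card L" using card_image_le[of "{0..<n}" "\<lambda>v. {v}"] by simp
    finally have "card A < card F" using cardL bigF by linarith
    from kernel_exists[OF le_refl finA finF this] obtain d where
      d: "\<forall>e. e \<notin> F \<longrightarrow> d e = 0" "\<exists>e\<in>F. d e \<noteq> 0" "\<forall>a\<in>A. (\<Sum>e\<in>F. a e * d e) = 0" by blast
    have transl: "sum d (cut n S) = (\<Sum>e\<in>F. ind S e * d e)" for S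
    proof -
      have "sum d (cut n S) = (\<Sum>e\<in>E n. ind S e * d e)" unfolding cut_sum ind_def
        by (rule sum.cong) auto
      also have "\<dots> = (\<Sum>e\<in>F. ind S e * d e)"
        by (rule sum.mono_neutral_right) (use finite_E FE d(1) in auto)
      finally show ?thesis .
    qed
    have dG: "sum d (cut n S) = 0" if "S \<in> Gen" for S
      using transl[of S] d(3) that unfolding A_def by auto
    have dv: "sum d (cut n {v}) = 0" if "v < n" for v using dG that unfolding Gen_def by auto
    have dL: "sum d (cut n S) = 0" if "S \<in> L" for S using dG that unfolding Gen_def by auto
    have d0: "d e = 0" if "e \<notin> support n x" for e using d(1) that unfolding F_def by auto
    have tight: "sum d (cut n S) = 0" if "S \<subseteq> {0..<n}" "S \<noteq> {}" "S \<noteq> {0..<n}" "sum x (cut n S) = 2" for S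
      using uncross[OF xP _ _ maxL d0 dv dL that] L by blast
    have d1: "d e = 0" if he: "e \<in> E n" and hx: "x e = 1" for e
    proof -
      obtain i j where e: "e = {i,j}" "i \<noteq> j" "i < n" "j < n" using he by (rule pairE)
      have xe: "sum x (cut n {i,j}) = 2" using pair_cut[OF e(3,4,2), of x] PS(2)[OF xP] e hx by simp
      have "{i,j} \<noteq> {0..<n}"
      proof
        assume "{i,j} = {0..<n}"
        then have "card {i,j} = n" by simp
        with e(2) n3 show False by simp
      qed
      then have "sum d (cut n {i,j}) = 0" using tight[of "{i,j}"] xe e by auto
      then show ?thesis using pair_cut[OF e(3,4,2), of d] dv e by simp
    qed
    have ev: "eventually (\<lambda>\<epsilon>. 0 < \<epsilon> \<and>
        (\<forall>S\<in>Pow {0..<n}. S \<noteq> {} \<and> S \<noteq> {0..<n} \<longrightarrow> \<epsilon> * \<bar>sum d (cut n S)\<bar> \<le> sum x (cut n S) - 2) \<and>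
        (\<forall>e\<in>E n. \<epsilon> * \<bar>d e\<bar> \<le> x e \<and> \<epsilon> * \<bar>d e\<bar> \<le> 1 - x e)) (at_right (0::real))"
    proof (intro eventually_conj eventually_ball_finite ballI)
      show "eventually (\<lambda>\<epsilon>. 0 < \<epsilon>) (at_right (0::real))" by (rule eventually_at_right_less)
      show "finite (Pow {0..<n})" by simp
      show "finite (E n)" by (rule finite_E)
      fix S assume "S \<in> Pow {0..<n}"
      then have S: "S \<subseteq> {0..<n}" by simp
      show "eventually (\<lambda>\<epsilon>. S \<noteq> {} \<and> S \<noteq> {0..<n} \<longrightarrow> \<epsilon> * \<bar>sum d (cut n S)\<bar> \<le> sum x (cut n S) - 2) (at_right 0)"
      proof (cases "S \<noteq> {} \<and> S \<noteq> {0..<n}")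
        case True
        have g: "0 \<le> sum x (cut n S) - 2" using cut_ge2[OF xP S] True by simp
        have "sum d (cut n S) = 0 \<or> 0 < sum x (cut n S) - 2" using g tight[OF S] True by force
        from EV[OF g this] show ?thesis by (rule eventually_mono) simp
      qed auto
    next
      fix e assume e: "e \<in> E n"
      have "d e = 0 \<or> 0 < x e" using d0 xpos unfolding F_def by blast
      then show "eventually (\<lambda>\<epsilon>. \<epsilon> * \<bar>d e\<bar> \<le> x e) (at_right 0)" using EV PS(4)[OF xP e] by blast
      have "d e = 0 \<or> 0 < 1 - x e" using d1[OF e] PS(5)[OF xP e] by force
      then show "eventually (\<lambda>\<epsilon>. \<epsilon> * \<bar>d e\<bar> \<le> 1 - x e) (at_right 0)" using EV PS(5)[OF xP e] by simp
    qed
    have "at_right (0::real) \<noteq> bot" using trivial_limit_at_right_real by blast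
    from eventually_happens'[OF this ev] obtain \<epsilon> where eps: "0 < \<epsilon>"
      "\<forall>S\<in>Pow {0..<n}. S \<noteq> {} \<and> S \<noteq> {0..<n} \<longrightarrow> \<epsilon> * \<bar>sum d (cut n S)\<bar> \<le> sum x (cut n S) - 2"
      "\<forall>e\<in>E n. \<epsilon> * \<bar>d e\<bar> \<le> x e \<and> \<epsilon> * \<bar>d e\<bar> \<le> 1 - x e" by blast
    have pert: "(\<lambda>e. x e + t * d e) \<in> P_SEP n" if t: "\<bar>t\<bar> \<le> \<epsilon>" for t
    proof -
      have lin: "sum (\<lambda>e. x e + t * d e) (cut n S) = sum x (cut n S) + t * sum d (cut n S)" for S
        by (simp add: sum.distrib sum_distrib_left)
      have c1: "\<forall>e. e \<notin> E n \<longrightarrow> x e + t * d e = 0" using PS(1)[OF xP] d(1) FE by auto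
      have c2: "\<forall>v\<in>V n. sum (\<lambda>e. x e + t * d e) (cut n {v}) = 2"
        using PS(2)[OF xP] dv by (simp add: lin V_def)
      have c3: "\<forall>S. S \<subseteq> V n \<and> 3 \<le> card S \<and> card S \<le> n - 3 \<longrightarrow> 2 \<le> sum (\<lambda>e. x e + t * d e) (cut n S)"
      proof (intro allI impI)
        fix S assume S: "S \<subseteq> V n \<and> 3 \<le> card S \<and> card S \<le> n - 3"
        then have "S \<noteq> {}" by auto
        moreover have "S \<noteq> {0..<n}" using S n3 by auto
        ultimately have "\<epsilon> * \<bar>sum d (cut n S)\<bar> \<le> sum x (cut n S) - 2" using eps(2) S by (auto simp: V_def)
        then show "2 \<le> sum (\<lambda>e. x e + t * d e) (cut n S)" using AB[OF t] unfolding lin by fastforce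
      qed
      have c4: "\<forall>e\<in>E n. 0 \<le> x e + t * d e \<and> x e + t * d e \<le> 1"
      proof
        fix e assume "e \<in> E n"
        then have "\<epsilon> * \<bar>d e\<bar> \<le> x e" "\<epsilon> * \<bar>d e\<bar> \<le> 1 - x e" using eps(3) by auto
        then show "0 \<le> x e + t * d e \<and> x e + t * d e \<le> 1" using AB[OF t, of "d e"] by fastforce
      qed
      show ?thesis unfolding P_SEP_def using c1 c2 c3 c4 by blast
    qed
    define y where "y = (\<lambda>e. x e + \<epsilon> * d e)"
    define z where "z = (\<lambda>e. x e + (- \<epsilon>) * d e)"
    have yP: "y \<in> P_SEP n" unfolding y_def using pert eps(1) by simp
    have zP: "z \<in> P_SEP n" unfolding z_def using pert[of "- \<epsilon>"] eps(1) by simp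
    obtain e0 where "e0 \<in> F" "d e0 \<noteq> 0" using d(2) by blast
    then have "y e0 \<noteq> z e0" using eps(1) unfolding y_def z_def by simp
    then have "y \<noteq> z" by blast
    moreover have "x = (\<lambda>e. (1 - 1/2) * y e + 1/2 * z e)" unfolding y_def z_def by (auto simp: algebra_simps)
    ultimately have "\<exists>y\<in>P_SEP n. \<exists>z\<in>P_SEP n. y \<noteq> z \<and> (\<exists>u::real. 0 < u \<and> u < 1 \<and> x = (\<lambda>e. (1 - u) * y e + u * z e))"
      using yP zP by (intro bexI[of _ y] bexI[of _ z] conjI exI[of _ "1/2::real"]) auto
    then show False using vert unfolding is_vertex_def by blast
  qed
  show ?thesis using part1 part2 by simp
qed

end
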